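(* Let $n\geq 2$ and let $(x_i,y_i)_{i=1}^n$ be labeled examples with $x_i\in\mathbb{R}^d$, $y_i\in\{-1,+1\}$, $\max_i\|x_i\|\leq 1$. Let $Q\in\mathbb{R}^{n\times n}$ with $Q_{ij} = y_iy_j\langle x_i,x_j\rangle$, let $\sigma^2 \geq \frac{1}{n}\|Q\|$ (spectral norm), $\lambda>0$, $b\in\{1,\dots,n\}$ and $\beta_b := 1+\frac{(b-1)(n\sigma^2-1)}{n-1}$. For $\alpha,\delta\in\mathbb{R}^n$ define $$D(\alpha) := -\frac{1}{2\lambda n^2}\alpha^\top Q\alpha + \frac{1}{n}\sum_{i=1}^n\alpha_i,$$ $$H(\delta,\alpha) := -\frac{\alpha^\top Q\alpha + 2\alpha^\top Q\delta + \beta_b\|\delta\|^2}{2\lambda n^2} + \sum_{i=1}^n\frac{\alpha_i+\delta_i}{n}.$$ Then for any $\alpha,\delta\in\mathbb{R}^n$, if $A$ is drawn uniformly at random among subsets of $\{1,\dots,n\}$ of cardinality $b$, $$\mathbb{E}_A\big[D(\alpha+\delta_{[A]})\big] \geq \Big(1-\frac{b}{n}\Big)D(\alpha) + \frac{b}{n}H(\delta,\alpha),$$ where $\delta_{[A]}\in\mathbb{R}^n$ agrees with $\delta$ on coordinates in $A$ and is zero elsewhere.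
   Context: $D$ is the (unconstrained expression of the) SVM dual objective; $\|Q\|$ is the spectral norm of $Q$. *)

theory Defs
  imports "HOL-Analysis.Analysis" "HOL-Probability.Probability_Mass_Function"
begin

text \<open>Examples are indexed by a finite type 'n (so n = CARD('n)); features live in
  real^'d.  Q_ij = y_i y_j <x_i, x_j>.\<close>

definition Qmat :: "('n::finite \<Rightarrow> real^'d::finite) \<Rightarrow> ('n \<Rightarrow> real) \<Rightarrow> real^'n^'n" where
  "Qmat x y = (\<chi> i j. y i * y j * (x i \<bullet> x j))"

definition spec_norm :: "real^'n::finite^'m::finite \<Rightarrow> real" where
  "spec_norm M = onorm (\<lambda>v. M *v v)"

definition betab :: "nat \<Rightarrow> nat \<Rightarrow> real \<Rightarrow> real" where
  "betab n b \<sigma>2 = 1 + (real b - 1) * (real n * \<sigma>2 - 1) / (real n - 1)"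

definition Dobj :: "real^'n^'n \<Rightarrow> real \<Rightarrow> real^'n::finite \<Rightarrow> real" where
  "Dobj Q lam \<alpha> = - (1 / (2 * lam * real CARD('n)^2)) * (\<alpha> \<bullet> (Q *v \<alpha>))
      + (1 / real CARD('n)) * (\<Sum>i\<in>UNIV. \<alpha> $ i)"

definition Hobj :: "real^'n^'n \<Rightarrow> real \<Rightarrow> real \<Rightarrow> real^'n::finite \<Rightarrow> real^'n \<Rightarrow> real" where
  "Hobj Q lam \<beta> \<delta> \<alpha> =
     - ((\<alpha> \<bullet> (Q *v \<alpha>)) + 2 * (\<alpha> \<bullet> (Q *v \<delta>)) + \<beta> * (norm \<delta>)^2) / (2 * lam * real CARD('n)^2)
     + (\<Sum>i\<in>UNIV. (\<alpha> $ i + \<delta> $ i) / real CARD('n))"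

definition restr :: "real^'n::finite \<Rightarrow> 'n set \<Rightarrow> real^'n" where
  "restr \<delta> A = (\<chi> i. if i \<in> A then \<delta> $ i else 0)"

definition unif_subset_exp :: "nat \<Rightarrow> ('n::finite set \<Rightarrow> real) \<Rightarrow> real" where
  "unif_subset_exp b f = measure_pmf.expectation (pmf_of_set {A. card A = b}) f"

end

theory Submission imports Defs begin

lemma card_sup:
  fixes F :: "'n::finite set"
  assumes "card F \<le> b"
  shows "card {A::'n set. card A = b \<and> F \<subseteq> A} = (CARD('n) - card F) choose (b - card F)"
proof -
  have "bij_betw (\<lambda>A. A - F) {A::'n set. card A = b \<and> F \<subseteq> A} {B. B \<subseteq> UNIV - F \<and> card B = b - card F}"
  proof (rule bij_betw_byWitness[where f'="\<lambda>B. B \<union> F"])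
    show "\<forall>a\<in>{A::'n set. card A = b \<and> F \<subseteq> A}. a - F \<union> F = a" by auto
    show "\<forall>a'\<in>{B. B \<subseteq> UNIV - F \<and> card B = b - card F}. a' \<union> F - F = a'" by auto
    show "(\<lambda>A. A - F) ` {A. card A = b \<and> F \<subseteq> A} \<subseteq> {B. B \<subseteq> UNIV - F \<and> card B = b - card F}"
      by (auto simp: card_Diff_subset)
    show "(\<lambda>B. B \<union> F) ` {B. B \<subseteq> UNIV - F \<and> card B = b - card F} \<subseteq> {A. card A = b \<and> F \<subseteq> A}"
    proof clarify
      fix B assume "B \<subseteq> UNIV - F" "card B = b - card F"
      then have "card (B \<union> F) = card B + card F" by (subst card_Un_disjoint) auto
      then show "card (B \<union> F) = b \<and> F \<subseteq> B \<union> F" using assms \<open>card B = b - card F\<close> by auto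
    qed
  qed
  then have "card {A::'n set. card A = b \<and> F \<subseteq> A} = card {B. B \<subseteq> UNIV - F \<and> card B = b - card F}"
    by (rule bij_betw_same_card)
  also have "\<dots> = card (UNIV - F) choose (b - card F)" by (rule n_subsets) simp
  also have "card (UNIV - F) = CARD('n) - card F" by (simp add: card_Diff_subset)
  finally show ?thesis .
qed

lemma card_sup_empty:
  fixes F :: "'n::finite set"
  assumes "card F > b"
  shows "{A::'n set. card A = b \<and> F \<subseteq> A} = {}"
proof -
  have "card F \<le> card A" if "F \<subseteq> A" for A :: "'n set" using that by (simp add: card_mono)
  then show ?thesis using assms by (metis (mono_tags, lifting) Collect_empty_eq not_le)
qed

definition qf :: "real^'n^'n \<Rightarrow> real^'n::finite \<Rightarrow> real^'n \<Rightarrow> real" where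
  "qf Q u w = (\<Sum>i\<in>UNIV. \<Sum>j\<in>UNIV. u$i * Q$i$j * w$j)"

lemma inner_qf: "u \<bullet> (Q *v w) = qf Q u w"
  by (simp add: qf_def inner_vec_def matrix_vector_mult_def sum_distrib_left mult.assoc)

lemma counts:
  fixes i j :: "'n::finite"
  assumes "1 \<le> b" "b \<le> CARD('n)"
  shows "card ({A::'n set. card A = b} \<inter> {A. i \<in> A}) * CARD('n) = card {A::'n set. card A = b} * b"
    and "i \<noteq> j \<Longrightarrow> card ({A::'n set. card A = b} \<inter> {A. i \<in> A \<and> j \<in> A}) * (CARD('n) * (CARD('n) - 1))
          = card {A::'n set. card A = b} * (b * (b - 1))"
proof -
  have N: "card {A::'n set. card A = b} = CARD('n) choose b"
    using card_sup[of "{}::'n set" b] by simp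
  have c1: "card ({A::'n set. card A = b} \<inter> {A. i \<in> A}) = (CARD('n) - 1) choose (b - 1)"
    using card_sup[of "{i}" b] assms by (simp add: Int_def)
  show "card ({A::'n set. card A = b} \<inter> {A. i \<in> A}) * CARD('n) = card {A::'n set. card A = b} * b"
    unfolding N c1 using times_binomial_minus1_eq[of b "CARD('n)"] assms by (simp add: mult.commute)
  assume "i \<noteq> j"
  show "card ({A::'n set. card A = b} \<inter> {A. i \<in> A \<and> j \<in> A}) * (CARD('n) * (CARD('n) - 1))
          = card {A::'n set. card A = b} * (b * (b - 1))"
  proof (cases "b = 1")
    case True
    have "{A::'n set. card A = b} \<inter> {A. i \<in> A \<and> j \<in> A} = {}"
      using card_sup_empty[of b "{i,j}"] True \<open>i \<noteq> j\<close> by auto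
    then show ?thesis using True by simp
  next
    case False
    have c2: "card ({A::'n set. card A = b} \<inter> {A. i \<in> A \<and> j \<in> A}) = (CARD('n) - 2) choose (b - 2)"
    proof -
      have c: "card {i,j} = 2" using \<open>i \<noteq> j\<close> by simp
      have "2 \<le> b" using assms False by simp
      then have "card {A::'n set. card A = b \<and> {i,j} \<subseteq> A} = (CARD('n) - 2) choose (b - 2)"
        using card_sup[of "{i,j}" b, unfolded c] by blast
      moreover have "{A::'n set. card A = b \<and> {i,j} \<subseteq> A} = {A::'n set. card A = b} \<inter> {A. i \<in> A \<and> j \<in> A}"
        by auto
      ultimately show ?thesis by simp
    qed
    have e1: "b * (CARD('n) choose b) = CARD('n) * ((CARD('n) - 1) choose (b - 1))"
      using times_binomial_minus1_eq[of b "CARD('n)"] assms by simp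
    have e2: "(b - 1) * ((CARD('n) - 1) choose (b - 1)) = (CARD('n) - 1) * ((CARD('n) - 2) choose (b - 2))"
    proof -
      have h1: "CARD('n) - 1 - 1 = CARD('n) - 2" "b - 1 - 1 = b - 2" by auto
      have "0 < b - 1" using assms False by simp
      from times_binomial_minus1_eq[OF this, of "CARD('n) - 1"] show ?thesis unfolding h1 .
    qed
    have "(CARD('n) choose b) * (b * (b - 1)) = CARD('n) * ((b - 1) * ((CARD('n) - 1) choose (b - 1)))"
      using e1 by (metis mult.assoc mult.commute)
    also have "\<dots> = CARD('n) * ((CARD('n) - 1) * ((CARD('n) - 2) choose (b - 2)))" using e2 by simp
    finally have "(CARD('n) choose b) * (b * (b - 1)) = CARD('n) * ((CARD('n) - 1) * ((CARD('n) - 2) choose (b - 2)))" .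
    then show ?thesis unfolding N c2 by (simp only: mult.assoc mult.commute mult.left_commute)
  qed
qed

theorem lemma3:
  fixes x :: "'n::finite \<Rightarrow> real^'d::finite" and y :: "'n \<Rightarrow> real"
    and \<sigma>2 lam :: real and b :: nat and \<alpha> \<delta> :: "real^'n"
  assumes "CARD('n) \<ge> 2"
    and "\<forall>i. y i \<in> {-1, 1}"
    and "\<forall>i. norm (x i) \<le> 1"
    and "\<sigma>2 \<ge> spec_norm (Qmat x y) / real CARD('n)"
    and "lam > 0"
    and "1 \<le> b" and "b \<le> CARD('n)"
  shows "unif_subset_exp b (\<lambda>A. Dobj (Qmat x y) lam (\<alpha> + restr \<delta> A))
    \<ge> (1 - real b / real CARD('n)) * Dobj (Qmat x y) lam \<alpha>
      + (real b / real CARD('n)) * Hobj (Qmat x y) lam (betab CARD('n) b \<sigma>2) \<delta> \<alpha>"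
proof -
  define n where "n = CARD('n)"
  define S where "S = {A::'n set. card A = b}"
  define N where "N = card S"
  define Q where "Q = Qmat x y"
  define p1 where "p1 = real b / real n"
  define p2 where "p2 = real b * (real b - 1) / (real n * (real n - 1))"
  have n2: "real n \<ge> 2" using assms(1) n_def by simp
  have finS: "finite S" by simp
  have Nn: "N = n choose b" using card_sup[of "{}::'n set" b] by (simp add: N_def S_def n_def)
  have Npos: "N > 0" unfolding Nn using assms(7) n_def by simp
  have Sne: "S \<noteq> {}" using Npos N_def by auto
  have c1: "real (card (S \<inter> {A. i \<in> A})) = real N * p1" for i
  proof -
    have "real (card (S \<inter> {A. i \<in> A})) * real n = real N * real b"
      using counts(1)[OF assms(6,7), of i] unfolding S_def N_def n_def
      by (metis of_nat_mult)
    then show ?thesis using n2 unfolding p1_def by (simp add: field_simps)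
  qed
  have c2: "real (card (S \<inter> {A. i \<in> A \<and> j \<in> A})) = real N * (if i = j then p1 else p2)" for i j
  proof (cases "i = j")
    case True then show ?thesis using c1[of i] by simp
  next
    case False
    have "real (card (S \<inter> {A. i \<in> A \<and> j \<in> A}) * (n * (n - 1))) = real (N * (b * (b - 1)))"
      using counts(2)[OF assms(6,7) False] unfolding S_def N_def n_def by metis
    then have "real (card (S \<inter> {A. i \<in> A \<and> j \<in> A})) * (real n * (real n - 1)) = real N * (real b * (real b - 1))"
      using n2 assms(6) by (simp add: of_nat_diff)
    then show ?thesis using n2 False unfolding p2_def by (simp add: field_simps)
  qed
  have Qsym: "Q$i$j = Q$j$i" for i j by (simp add: Q_def Qmat_def inner_commute)
  have Qdiag: "Q$i$i \<le> 1" for i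
  proof -
    have "y i \<in> {-1, 1}" using assms(2) by blast
    then have "y i * y i = 1" by auto
    moreover have "x i \<bullet> x i \<le> 1" using assms(3) norm_ge_zero[of "x i"]
      by (metis power2_norm_eq_inner power_le_one)
    ultimately show ?thesis by (simp add: Q_def Qmat_def)
  qed
  have vA: "(\<alpha> + restr \<delta> A)$i = \<alpha>$i + of_bool (i\<in>A) * \<delta>$i" for A i by (simp add: restr_def)
  have qsym: "qf Q \<delta> \<alpha> = qf Q \<alpha> \<delta>"
    unfolding qf_def by (subst sum.swap) (simp add: Qsym mult.commute mult.left_commute)
  have quadsum: "(\<Sum>A\<in>S. qf Q (\<alpha> + restr \<delta> A) (\<alpha> + restr \<delta> A)) = real N * (qf Q \<alpha> \<alpha> + 2*p1*qf Q \<alpha> \<delta> + p2 * qf Q \<delta> \<delta> + (p1 - p2) * (\<Sum>i\<in>UNIV. Q$i$i * (\<delta>$i)^2))"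
  proof -
    have "(\<Sum>A\<in>S. qf Q (\<alpha> + restr \<delta> A) (\<alpha> + restr \<delta> A)) = (\<Sum>i\<in>UNIV. \<Sum>j\<in>UNIV. \<Sum>A\<in>S. (\<alpha>$i + of_bool (i\<in>A) * \<delta>$i) * Q$i$j * (\<alpha>$j + of_bool (j\<in>A) * \<delta>$j))"
      unfolding qf_def vA by (simp add: sum.swap[where A=S])
    also have "\<dots> = (\<Sum>i\<in>UNIV. \<Sum>j\<in>UNIV. real N * (\<alpha>$i*Q$i$j*\<alpha>$j + p1*(\<alpha>$i*Q$i$j*\<delta>$j) + p1*(\<delta>$i*Q$i$j*\<alpha>$j) + (if i=j then p1 else p2)*(\<delta>$i*Q$i$j*\<delta>$j)))"
    proof (intro sum.cong refl)
      fix i j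
      have "(\<Sum>A\<in>S. (\<alpha>$i + of_bool (i\<in>A) * \<delta>$i) * Q$i$j * (\<alpha>$j + of_bool (j\<in>A) * \<delta>$j))
        = (\<Sum>A\<in>S. \<alpha>$i*Q$i$j*\<alpha>$j + (\<alpha>$i*Q$i$j*\<delta>$j) * of_bool (j\<in>A) + (\<delta>$i*Q$i$j*\<alpha>$j) * of_bool (i\<in>A) + (\<delta>$i*Q$i$j*\<delta>$j) * of_bool (i\<in>A \<and> j\<in>A))"
        by (intro sum.cong refl) (auto simp: algebra_simps)
      also have "\<dots> = real N * (\<alpha>$i*Q$i$j*\<alpha>$j) + (\<alpha>$i*Q$i$j*\<delta>$j) * real (card (S \<inter> {A. j \<in> A}))
           + (\<delta>$i*Q$i$j*\<alpha>$j) * real (card (S \<inter> {A. i \<in> A})) + (\<delta>$i*Q$i$j*\<delta>$j) * real (card (S \<inter> {A. i \<in> A \<and> j \<in> A}))"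
        using finS by (simp add: sum.distrib sum_distrib_left[symmetric] N_def mult.commute)
      also have "\<dots> = real N * (\<alpha>$i*Q$i$j*\<alpha>$j + p1*(\<alpha>$i*Q$i$j*\<delta>$j) + p1*(\<delta>$i*Q$i$j*\<alpha>$j) + (if i=j then p1 else p2)*(\<delta>$i*Q$i$j*\<delta>$j))"
        unfolding c1 c2 by (simp add: algebra_simps)
      finally show "(\<Sum>A\<in>S. (\<alpha>$i + of_bool (i\<in>A) * \<delta>$i) * Q$i$j * (\<alpha>$j + of_bool (j\<in>A) * \<delta>$j)) = real N * (\<alpha>$i*Q$i$j*\<alpha>$j + p1*(\<alpha>$i*Q$i$j*\<delta>$j) + p1*(\<delta>$i*Q$i$j*\<alpha>$j) + (if i=j then p1 else p2)*(\<delta>$i*Q$i$j*\<delta>$j))" .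
    qed
    also have "\<dots> = real N * (qf Q \<alpha> \<alpha> + p1 * qf Q \<alpha> \<delta> + p1 * qf Q \<delta> \<alpha> + (\<Sum>i\<in>UNIV. \<Sum>j\<in>UNIV. (if i=j then p1 else p2)*(\<delta>$i*Q$i$j*\<delta>$j)))"
      by (simp add: qf_def sum.distrib sum_distrib_left distrib_left)
    also have "(\<Sum>i\<in>UNIV. \<Sum>j\<in>UNIV. (if i=j then p1 else p2)*(\<delta>$i*Q$i$j*\<delta>$j)) = p2 * qf Q \<delta> \<delta> + (p1 - p2) * (\<Sum>i\<in>UNIV. Q$i$i * (\<delta>$i)^2)"
    proof -
      have "(\<Sum>i\<in>UNIV. \<Sum>j\<in>UNIV. (if i=j then p1 else p2)*(\<delta>$i*Q$i$j*\<delta>$j))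
          = (\<Sum>i\<in>UNIV. \<Sum>j\<in>UNIV. p2*(\<delta>$i*Q$i$j*\<delta>$j) + (if i = j then (p1 - p2)*(\<delta>$i*Q$i$j*\<delta>$j) else 0))"
        by (intro sum.cong refl) (auto simp: algebra_simps)
      also have "\<dots> = p2 * qf Q \<delta> \<delta> + (p1 - p2) * (\<Sum>i\<in>UNIV. Q$i$i * (\<delta>$i)^2)"
        by (simp add: qf_def sum.distrib sum_distrib_left power2_eq_square mult_ac)
      finally show ?thesis .
    qed
    finally show ?thesis using qsym by (simp add: algebra_simps)
  qed
  have linsum: "(\<Sum>A\<in>S. \<Sum>i\<in>UNIV. (\<alpha> + restr \<delta> A)$i) = real N * ((\<Sum>i\<in>UNIV. \<alpha>$i) + p1 * (\<Sum>i\<in>UNIV. \<delta>$i))"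
  proof -
    have "(\<Sum>A\<in>S. \<Sum>i\<in>UNIV. (\<alpha> + restr \<delta> A)$i) = (\<Sum>i\<in>UNIV. \<Sum>A\<in>S. \<alpha>$i + \<delta>$i * of_bool (i\<in>A))"
      unfolding vA by (subst sum.swap) (simp add: mult.commute)
    also have "\<dots> = (\<Sum>i\<in>UNIV. real N * \<alpha>$i + \<delta>$i * real (card (S \<inter> {A. i \<in> A})))"
      using finS by (simp add: sum.distrib sum_distrib_left[symmetric] N_def)
    also have "\<dots> = real N * ((\<Sum>i\<in>UNIV. \<alpha>$i) + p1 * (\<Sum>i\<in>UNIV. \<delta>$i))"
      unfolding c1 by (simp add: sum.distrib sum_distrib_left algebra_simps)
    finally show ?thesis .
  qed
  define K where "K = 1 / (2 * lam * real n ^ 2)"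
  have Kpos: "K > 0" using assms(5) n2 unfolding K_def by simp
  have Dq: "Dobj Q lam v = - K * qf Q v v + (1 / real n) * (\<Sum>i\<in>UNIV. v$i)" for v
    by (simp add: Dobj_def K_def n_def inner_qf)
  have E: "unif_subset_exp b (\<lambda>A. Dobj Q lam (\<alpha> + restr \<delta> A))
      = - K * (qf Q \<alpha> \<alpha> + 2*p1*qf Q \<alpha> \<delta> + p2 * qf Q \<delta> \<delta> + (p1 - p2) * (\<Sum>i\<in>UNIV. Q$i$i * (\<delta>$i)^2))
        + (1 / real n) * ((\<Sum>i\<in>UNIV. \<alpha>$i) + p1 * (\<Sum>i\<in>UNIV. \<delta>$i))"
  proof -
    have "unif_subset_exp b (\<lambda>A. Dobj Q lam (\<alpha> + restr \<delta> A)) = (\<Sum>A\<in>S. Dobj Q lam (\<alpha> + restr \<delta> A)) / real N"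
      unfolding unif_subset_exp_def S_def[symmetric] N_def
      by (rule integral_pmf_of_set[OF Sne finS])
    also have "(\<Sum>A\<in>S. Dobj Q lam (\<alpha> + restr \<delta> A)) = - K * (\<Sum>A\<in>S. qf Q (\<alpha> + restr \<delta> A) (\<alpha> + restr \<delta> A)) + (1 / real n) * (\<Sum>A\<in>S. \<Sum>i\<in>UNIV. (\<alpha> + restr \<delta> A)$i)"
      unfolding Dq by (simp only: sum.distrib sum_distrib_left)
    also have "- K * (\<Sum>A\<in>S. qf Q (\<alpha> + restr \<delta> A) (\<alpha> + restr \<delta> A)) + (1 / real n) * (\<Sum>A\<in>S. \<Sum>i\<in>UNIV. (\<alpha> + restr \<delta> A)$i)
       = real N * (- K * (qf Q \<alpha> \<alpha> + 2*p1*qf Q \<alpha> \<delta> + p2 * qf Q \<delta> \<delta> + (p1 - p2) * (\<Sum>i\<in>UNIV. Q$i$i * (\<delta>$i)^2))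
        + (1 / real n) * ((\<Sum>i\<in>UNIV. \<alpha>$i) + p1 * (\<Sum>i\<in>UNIV. \<delta>$i)))"
    proof -
      have gen: "\<And>a bb c d M::real. a*(M*bb) + c*(M*d) = M*(a*bb + c*d)" by (simp add: algebra_simps)
      show ?thesis unfolding quadsum linsum by (rule gen)
    qed
    finally show ?thesis using Npos by simp
  qed
  define \<beta> where "\<beta> = betab CARD('n) b \<sigma>2"
  have p1n: "real b / real CARD('n) = p1" by (simp add: p1_def n_def)
  have H: "Hobj Q lam \<beta> \<delta> \<alpha> = - K * (qf Q \<alpha> \<alpha> + 2 * qf Q \<alpha> \<delta> + \<beta> * (norm \<delta>)^2) + (1 / real n) * ((\<Sum>i\<in>UNIV. \<alpha>$i) + (\<Sum>i\<in>UNIV. \<delta>$i))"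
  proof -
    have h1: "(\<Sum>i\<in>UNIV. (\<alpha>$i + \<delta>$i) / real CARD('n)) = (1 / real n) * ((\<Sum>i\<in>UNIV. \<alpha>$i) + (\<Sum>i\<in>UNIV. \<delta>$i))"
      by (simp add: n_def sum.distrib sum_divide_distrib[symmetric])
    have h2: "- X / (2 * lam * real CARD('n)^2) = - K * X" for X by (simp add: K_def n_def)
    show ?thesis unfolding Hobj_def inner_qf h2 h1 by (rule refl)
  qed
  have RHS: "(1 - p1) * Dobj Q lam \<alpha> + p1 * Hobj Q lam \<beta> \<delta> \<alpha>
      = - K * (qf Q \<alpha> \<alpha> + 2*p1*qf Q \<alpha> \<delta> + p1 * \<beta> * (norm \<delta>)^2)
        + (1 / real n) * ((\<Sum>i\<in>UNIV. \<alpha>$i) + p1 * (\<Sum>i\<in>UNIV. \<delta>$i))"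
    unfolding Dq H by (simp add: algebra_simps diff_divide_distrib add_divide_distrib)
  have nd: "(norm \<delta>)^2 = (\<Sum>i\<in>UNIV. (\<delta>$i)^2)"
    by (simp add: norm_vec_def L2_set_def sum_nonneg)
  have dd: "(\<Sum>i\<in>UNIV. Q$i$i * (\<delta>$i)^2) \<le> (norm \<delta>)^2"
    unfolding nd
  proof (rule sum_mono)
    fix i show "Q$i$i * (\<delta>$i)^2 \<le> (\<delta>$i)^2"
      using mult_right_mono[OF Qdiag[of i] zero_le_power2[of "\<delta>$i"]] by simp
  qed
  have spec: "spec_norm Q \<le> real n * \<sigma>2" using assms(4) n2 unfolding Q_def n_def by (simp add: field_simps)
  have qdd: "qf Q \<delta> \<delta> \<le> real n * \<sigma>2 * (norm \<delta>)^2"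
  proof -
    have "qf Q \<delta> \<delta> = \<delta> \<bullet> (Q *v \<delta>)" by (simp add: inner_qf)
    also have "\<dots> \<le> norm \<delta> * norm (Q *v \<delta>)" by (rule norm_cauchy_schwarz)
    also have "\<dots> \<le> norm \<delta> * (spec_norm Q * norm \<delta>)"
      unfolding spec_norm_def by (intro mult_left_mono onorm) auto
    also have "\<dots> \<le> norm \<delta> * (real n * \<sigma>2 * norm \<delta>)"
      by (intro mult_left_mono mult_right_mono spec) auto
    finally show ?thesis by (simp add: power2_eq_square mult_ac)
  qed
  have p2eq: "p2 = p1 * (real b - 1) / (real n - 1)" unfolding p1_def p2_def using n2 by (simp add: field_simps)
  have p2nn: "p2 \<ge> 0" unfolding p2eq p1_def using n2 assms(6) by simp
  have p12: "p1 - p2 \<ge> 0"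
  proof -
    have "p1 - p2 = p1 * (real n - real b) / (real n - 1)" unfolding p2eq using n2 by (simp add: field_simps)
    moreover have "real n - real b \<ge> 0" using assms(7) n_def by simp
    ultimately show ?thesis unfolding p1_def using n2 by simp
  qed
  have beq: "p1 * \<beta> = p1 - p2 + p2 * (real n * \<sigma>2)"
  proof -
    define r where "r = (real b - 1) / (real n - 1)"
    have "p2 = p1 * r" unfolding p2eq r_def by simp
    moreover have "\<beta> = 1 + r * (real n * \<sigma>2 - 1)"
      unfolding \<beta>_def betab_def r_def n_def by simp
    ultimately have "p1 * \<beta> = p1 * (1 + r * (real n * \<sigma>2 - 1))" and "p2 = p1 * r" by simp_all
    moreover have "p1 * (1 + r * (real n * \<sigma>2 - 1)) = p1 - p1 * r + p1 * r * (real n * \<sigma>2)"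
      by (simp add: algebra_simps)
    ultimately show ?thesis by simp
  qed
  have key: "p2 * qf Q \<delta> \<delta> + (p1 - p2) * (\<Sum>i\<in>UNIV. Q$i$i * (\<delta>$i)^2) \<le> p1 * \<beta> * (norm \<delta>)^2"
  proof -
    have "p2 * qf Q \<delta> \<delta> \<le> p2 * (real n * \<sigma>2 * (norm \<delta>)^2)" using qdd p2nn by (rule mult_left_mono)
    moreover have "(p1 - p2) * (\<Sum>i\<in>UNIV. Q$i$i * (\<delta>$i)^2) \<le> (p1 - p2) * (norm \<delta>)^2" using dd p12 by (rule mult_left_mono)
    ultimately show ?thesis unfolding beq by (simp add: algebra_simps)
  qed
  have "K * (p2 * qf Q \<delta> \<delta> + (p1 - p2) * (\<Sum>i\<in>UNIV. Q$i$i * (\<delta>$i)^2)) \<le> K * (p1 * \<beta> * (norm \<delta>)^2)"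
    using key Kpos by simp
  then show ?thesis
    unfolding Q_def[symmetric] \<beta>_def[symmetric] p1n E RHS by (simp add: algebra_simps)
qed

end
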